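(* Let $p=(p_1(\cdot),\dots,p_N(\cdot))$ and $q=(q_1(\cdot),\dots,q_N(\cdot))$ be growth laws on $\mathcal O_N$, and let $(\eta(t))$, $(\sigma(t))$ be the ordered growth processes with laws $p$ and $q$ respectively. Assume that for all $\eta,\sigma\in\mathcal O_N$ with $\eta\prec\sigma$, $$\sum_{i=1}^k p_i(\eta)\le\sum_{i=1}^k q_i(\sigma)\qquad\text{for all }k=1,\dots,N.$$ Then, whenever $\eta(0),\sigma(0)\in\mathcal O_N$ satisfy $\eta(0)\prec\sigma(0)$, there is a coupling of the two processes such that $\eta(t)\prec\sigma(t)$ for all $t\ge0$.
   Context: $\mathcal O_N$ is the set of $\eta\in\mathbb N^N$ with $\eta_1\ge\dots\ge\eta_N$; for $\sigma\in\mathbb N^N$, $\bar\sigma$ is its nonincreasing rearrangement and $|\sigma|=\sum_i\sigma_i$. For $|\sigma|=|\eta|$, $\eta\prec\sigma$ (equivalently $\sigma\succ\eta$) means $\sum_{i=1}^k\bar\eta_i\le\sum_{i=1}^k\bar\sigma_i$ for all $k=1,\dots,N$. A growth law $p$ assigns to each $\eta\in\mathcal O_N$ a probability vector $(p_1(\eta),\dots,p_N(\eta))$. The ordered growth process with law $p$ is the Markov chain on $\mathcal O_N$ which, from state $\eta$, picks an index $J$ with $P(J=i)=p_i(\eta)$ and moves to $\overline{\eta+e_J}$ (the nonincreasing rearrangement of $\eta$ with one unit added at position $J$). *)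

theory Defs
  imports "HOL-Probability.Probability"
begin

text \<open>States are lists of naturals of length N (coordinates indexed 0..N-1,
  corresponding to 1..N in the paper).\<close>

definition rearr :: "nat list \<Rightarrow> nat list" where
  "rearr xs = rev (sort xs)"

definition ordered :: "nat \<Rightarrow> nat list set" where
  "ordered N = {xs. length xs = N \<and> sorted_wrt (\<ge>) xs}"

definition majorized :: "nat \<Rightarrow> nat list \<Rightarrow> nat list \<Rightarrow> bool" where
  "majorized N eta zeta \<longleftrightarrow> length eta = N \<and> length zeta = N \<and>
     sum_list eta = sum_list zeta \<and>
     (\<forall>k\<in>{1..N}. sum_list (take k (rearr eta)) \<le> sum_list (take k (rearr zeta)))"

definition growth_law :: "nat \<Rightarrow> (nat list \<Rightarrow> nat \<Rightarrow> real) \<Rightarrow> bool" where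
  "growth_law N p \<longleftrightarrow> (\<forall>eta\<in>ordered N. (\<forall>i<N. 0 \<le> p eta i) \<and> (\<Sum>i<N. p eta i) = 1)"

definition grow_trans :: "nat \<Rightarrow> (nat list \<Rightarrow> nat \<Rightarrow> real) \<Rightarrow> nat list \<Rightarrow> nat list \<Rightarrow> real" where
  "grow_trans N p eta eta' = (\<Sum>i\<in>{i. i < N \<and> rearr (eta[i := eta ! i + 1]) = eta'}. p eta i)"

text \<open>X is (under the probability measure M) an ordered growth process with law p started
  at eta0: all finite-dimensional cylinder events are measurable and have the Markov-chain
  probabilities.  This determines the law of the trajectory.\<close>
definition is_growth_process ::
  "nat \<Rightarrow> (nat list \<Rightarrow> nat \<Rightarrow> real) \<Rightarrow> nat list \<Rightarrow> 'w measure \<Rightarrow> ('w \<Rightarrow> nat \<Rightarrow> nat list) \<Rightarrow> bool" where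
  "is_growth_process N p eta0 M X \<longleftrightarrow>
     (\<forall>xs. xs \<noteq> [] \<longrightarrow>
        {w\<in>space M. \<forall>i<length xs. X w i = xs ! i} \<in> sets M \<and>
        measure M {w\<in>space M. \<forall>i<length xs. X w i = xs ! i} =
          (if hd xs = eta0 then (\<Prod>i<length xs - 1. grow_trans N p (xs ! i) (xs ! Suc i)) else 0))"

end

theory Submission imports Defs begin

lemma ordered_rearr: "length xs = N \<Longrightarrow> rearr xs \<in> ordered N"
  by (simp add: rearr_def ordered_def sorted_wrt_rev)

lemma rearr_eq: "mset ys = mset xs \<Longrightarrow> sorted_wrt (\<ge>) ys \<Longrightarrow> rearr xs = ys"
proof -
  assume a: "mset ys = mset xs" "sorted_wrt (\<ge>) ys"
  have "sort xs = rev ys"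
    by (rule properties_for_sort) (use a in \<open>auto simp: sorted_wrt_rev\<close>)
  thus ?thesis by (simp add: rearr_def)
qed

lemma rearr_id: "xs \<in> ordered N \<Longrightarrow> rearr xs = xs"
  by (rule rearr_eq) (auto simp: ordered_def)

lemma ordered_nth_mono: "x \<in> ordered N \<Longrightarrow> i \<le> j \<Longrightarrow> j < N \<Longrightarrow> x ! j \<le> x ! i"
proof (cases "i = j")
  case False
  assume "x \<in> ordered N" "i \<le> j" "j < N"
  hence "sorted_wrt (\<ge>) x" "length x = N" "i < j" using False by (auto simp: ordered_def)
  hence "(\<lambda>x y. y \<le> x) (x ! i) (x ! j)" using \<open>j < N\<close> by (intro sorted_wrt_nth_less) auto
  thus ?thesis by simp
qed simp

definition first_eq :: "nat list \<Rightarrow> nat \<Rightarrow> nat" where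
  "first_eq x J = (LEAST i. x ! i = x ! J)"

lemma first_eq_le: "first_eq x J \<le> J"
  unfolding first_eq_def by (rule Least_le) simp

lemma first_eq_val: "x ! first_eq x J = x ! J"
  unfolding first_eq_def by (rule LeastI) simp

lemma first_eq_less: "i < first_eq x J \<Longrightarrow> x ! i \<noteq> x ! J"
  unfolding first_eq_def using not_less_Least by blast

lemma first_eq_between: "x \<in> ordered N \<Longrightarrow> J < N \<Longrightarrow> first_eq x J \<le> i \<Longrightarrow> i \<le> J \<Longrightarrow> x ! i = x ! J"
proof -
  assume a: "x \<in> ordered N" "J < N" "first_eq x J \<le> i" "i \<le> J"
  have "x ! i \<le> x ! first_eq x J" using ordered_nth_mono[of x N "first_eq x J" i] a by simp
  moreover have "x ! J \<le> x ! i" using ordered_nth_mono[of x N i J] a by simp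
  ultimately show ?thesis using first_eq_val[of x J] by simp
qed

lemma step_form:
  assumes x: "x \<in> ordered N" and J: "J < N"
  shows "rearr (x[J := x ! J + 1]) = x[first_eq x J := x ! first_eq x J + 1]"
proof (rule rearr_eq)
  let ?j = "first_eq x J"
  have jl: "?j < N" using first_eq_le[of x J] J by simp
  have len: "length x = N" using x by (simp add: ordered_def)
  show "mset (x[?j := x ! ?j + 1]) = mset (x[J := x ! J + 1])"
    using jl J len by (simp add: mset_update first_eq_val)
  have sx: "sorted_wrt (\<ge>) x" using x by (simp add: ordered_def)
  show "sorted_wrt (\<ge>) (x[?j := x ! ?j + 1])"
  proof (subst sorted_wrt_iff_nth_less, intro allI impI)
    fix a b assume ab: "a < b" "b < length (x[?j := x ! ?j + 1])"
    hence b: "b < N" using len by simp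
    have m: "x ! b \<le> x ! a" using ordered_nth_mono[OF x] ab b by simp
    show "x[?j := x ! ?j + 1] ! b \<le> x[?j := x ! ?j + 1] ! a"
    proof (cases "a = ?j")
      case True thus ?thesis using ab m len b by (auto simp: nth_list_update)
    next
      case False
      show ?thesis
      proof (cases "b = ?j")
        case True
        hence "a < ?j" using ab by simp
        hence "x ! a \<noteq> x ! ?j" using first_eq_less[of a x J] first_eq_val[of x J] by simp
        thus ?thesis using True False m b len by (auto simp: nth_list_update)
      next
        case False2: False
        thus ?thesis using False m b len ab by (auto simp: nth_list_update)
      qed
    qed
  qed
qed

definition psum :: "nat \<Rightarrow> nat list \<Rightarrow> nat" where
  "psum k x = (\<Sum>i<k. x ! i)"

lemma sum_list_take_psum: "k \<le> length x \<Longrightarrow> sum_list (take k x) = psum k x"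
  unfolding psum_def by (simp add: sum_list_sum_nth atLeast0LessThan min_absorb1)

lemma sum_list_psum: "sum_list x = psum (length x) x"
  using sum_list_take_psum[of "length x" x] by simp

lemma psum_update: "j < length x \<Longrightarrow> psum k (x[j := x ! j + 1]) = psum k x + (if j < k then 1 else 0)"
  unfolding psum_def
  by (induction k) (auto simp: nth_list_update)

lemma majorized_ordered:
  assumes "a \<in> ordered N" "b \<in> ordered N"
  shows "majorized N a b \<longleftrightarrow> psum N a = psum N b \<and> (\<forall>k\<in>{1..N}. psum k a \<le> psum k b)"
proof -
  have l: "length a = N" "length b = N" using assms by (auto simp: ordered_def)
  have "(\<forall>k\<in>{1..N}. sum_list (take k (rearr a)) \<le> sum_list (take k (rearr b))) \<longleftrightarrow>
        (\<forall>k\<in>{1..N}. psum k a \<le> psum k b)"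
    using l by (simp add: rearr_id[OF assms(1)] rearr_id[OF assms(2)] sum_list_take_psum)
  moreover have "sum_list a = psum N a" "sum_list b = psum N b" using l sum_list_psum by metis+
  ultimately show ?thesis unfolding majorized_def using l by simp
qed

lemma psum_Suc: "psum (Suc k) x = psum k x + x ! k"
  by (simp add: psum_def)


lemma key_helper:
  assumes a: "a \<in> ordered N" and b: "b \<in> ordered N"
    and maj: "\<forall>k\<in>{1..N}. psum k a \<le> psum k b"
    and KJ: "K \<le> J" "J < N"
    and k: "k \<le> first_eq b K" "first_eq a J < k" and eq: "psum k a = psum k b"
  shows "k < first_eq b K \<and> psum (Suc k) a = psum (Suc k) b"
proof -
  let ?ja = "first_eq a J" and ?kb = "first_eq b K"
  have kbK: "?kb \<le> K" by (rule first_eq_le)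
  obtain m where m: "k = Suc m" using k by (cases k) auto
  have kN: "Suc k \<le> N" using k kbK KJ by simp
  have pm: "psum m a \<le> psum m b"
  proof (cases m)
    case 0 thus ?thesis by (simp add: psum_def)
  next
    case (Suc m') thus ?thesis using maj kN m by auto
  qed
  have e1: "b ! m \<le> a ! m" using eq pm m psum_Suc[of m a] psum_Suc[of m b] by simp
  have pk1: "psum (Suc k) a \<le> psum (Suc k) b" using maj kN by auto
  have e2: "a ! k \<le> b ! k" using eq pk1 psum_Suc[of k a] psum_Suc[of k b] by simp
  have am: "a ! m = a ! J" using first_eq_between[OF a KJ(2), of m] k m kbK KJ by simp
  have ak: "a ! k = a ! J" using first_eq_between[OF a KJ(2), of k] k m kbK KJ by simp
  have bmono: "b ! k \<le> b ! m" using ordered_nth_mono[OF b, of m k] m kN by simp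
  have bb: "b ! m = b ! k" "a ! k = b ! k" using e1 e2 am ak bmono by simp_all
  have "k \<noteq> ?kb"
  proof
    assume "k = ?kb"
    hence "b ! m \<noteq> b ! K" using first_eq_less[of m b K] m by simp
    moreover have "b ! k = b ! K" using \<open>k = ?kb\<close> first_eq_val[of b K] by simp
    ultimately show False using bb by simp
  qed
  hence "k < ?kb" using k by simp
  moreover have "psum (Suc k) a = psum (Suc k) b" using eq bb psum_Suc[of k a] psum_Suc[of k b] by simp
  ultimately show ?thesis by simp
qed

lemma key_strict:
  assumes a: "a \<in> ordered N" and b: "b \<in> ordered N"
    and maj: "\<forall>k\<in>{1..N}. psum k a \<le> psum k b"
    and KJ: "K \<le> J" "J < N"
    and k: "k \<le> first_eq b K" "first_eq a J < k"
  shows "psum k a < psum k b"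
  using k(1,2)
proof (induction k rule: inc_induct)
  case base
  have kbK: "first_eq b K \<le> K" by (rule first_eq_le)
  have "psum (first_eq b K) a \<le> psum (first_eq b K) b" using maj base kbK KJ by auto
  moreover have "psum (first_eq b K) a \<noteq> psum (first_eq b K) b"
    using key_helper[OF a b maj KJ _ base] by auto
  ultimately show ?case by simp
next
  case (step n)
  have kbK: "first_eq b K \<le> K" by (rule first_eq_le)
  have "psum n a \<le> psum n b" using maj step kbK KJ by auto
  moreover have "psum n a \<noteq> psum n b"
  proof
    assume e: "psum n a = psum n b"
    have "psum (Suc n) a = psum (Suc n) b" using key_helper[OF a b maj KJ _ step(4) e] step by simp
    moreover have "psum (Suc n) a < psum (Suc n) b" using step by simp
    ultimately show False by simp
  qed
  ultimately show ?case by simp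
qed

lemma majorized_step:
  assumes a: "a \<in> ordered N" and b: "b \<in> ordered N" and m: "majorized N a b"
    and KJ: "K \<le> J" "J < N"
  shows "majorized N (rearr (a[J := a ! J + 1])) (rearr (b[K := b ! K + 1]))"
proof -
  let ?ja = "first_eq a J" and ?kb = "first_eq b K"
  have la: "length a = N" and lb: "length b = N" using a b by (auto simp: ordered_def)
  have jaN: "?ja < N" using first_eq_le[of a J] KJ by simp
  have kbN: "?kb < N" using first_eq_le[of b K] KJ by simp
  have ea: "rearr (a[J := a ! J + 1]) = a[?ja := a ! ?ja + 1]" by (rule step_form[OF a KJ(2)])
  have eb: "rearr (b[K := b ! K + 1]) = b[?kb := b ! ?kb + 1]" by (rule step_form[OF b]) (use KJ in simp)
  have oa: "a[?ja := a ! ?ja + 1] \<in> ordered N" using ea ordered_rearr[of "a[J := a ! J + 1]" N] la by simp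
  have ob: "b[?kb := b ! ?kb + 1] \<in> ordered N" using eb ordered_rearr[of "b[K := b ! K + 1]" N] lb by simp
  have mm: "psum N a = psum N b" "\<forall>k\<in>{1..N}. psum k a \<le> psum k b"
    using m majorized_ordered[OF a b] by auto
  have "\<forall>k\<in>{1..N}. psum k (a[?ja := a ! ?ja + 1]) \<le> psum k (b[?kb := b ! ?kb + 1])"
  proof
    fix k assume k: "k \<in> {1..N}"
    have pk: "psum k a \<le> psum k b" using mm k by auto
    show "psum k (a[?ja := a ! ?ja + 1]) \<le> psum k (b[?kb := b ! ?kb + 1])"
    proof (cases "?ja < k \<and> k \<le> ?kb")
      case True
      hence "psum k a < psum k b" using key_strict[OF a b mm(2) KJ, of k] by simp
      thus ?thesis using psum_update[of ?ja a k] psum_update[of ?kb b k] jaN kbN la lb by simp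
    next
      case False
      thus ?thesis using pk psum_update[of ?ja a k] psum_update[of ?kb b k] jaN kbN la lb by auto
    qed
  qed
  moreover have "psum N (a[?ja := a ! ?ja + 1]) = psum N (b[?kb := b ! ?kb + 1])"
    using mm psum_update[of ?ja a N] psum_update[of ?kb b N] jaN kbN la lb by simp
  ultimately show ?thesis using majorized_ordered[OF oa ob] ea eb by simp
qed

definition D :: "real measure" where "D = uniform_measure lborel {0..1}"

lemma prob_space_D: "prob_space D"
  unfolding D_def by (rule prob_space_uniform_measure) auto

lemma sets_D[measurable_cong]: "sets D = sets borel"
  by (simp add: D_def)

lemma space_D[simp]: "space D = UNIV"
  by (simp add: D_def)

lemma measure_D_less:
  assumes "0 \<le> c" "c \<le> 1"
  shows "measure D {u. u < c} = c"
proof -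
  have "measure D {u. u < c} = measure lborel ({0..1} \<inter> {u. u < c}) / measure lborel {0..1::real}"
    unfolding D_def by (rule measure_uniform_measure) auto
  also have "{0..1} \<inter> {u. u < c} = {0..<c}" using assms by auto
  finally show ?thesis using assms by simp
qed

definition cum :: "(nat list \<Rightarrow> nat \<Rightarrow> real) \<Rightarrow> nat list \<Rightarrow> nat \<Rightarrow> real" where
  "cum p x j = (\<Sum>i<Suc j. p x i)"

definition idx :: "nat \<Rightarrow> (nat list \<Rightarrow> nat \<Rightarrow> real) \<Rightarrow> nat list \<Rightarrow> real \<Rightarrow> nat" where
  "idx N p x u = (\<Sum>i<N - 1. if cum p x i \<le> u then 1 else 0)"

lemma idx_measurable[measurable]: "idx N p x \<in> borel \<rightarrow>\<^sub>M count_space UNIV"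
  unfolding idx_def by measurable

lemma idx_less: "0 < N \<Longrightarrow> idx N p x u < N"
proof -
  assume "0 < N"
  have "idx N p x u \<le> (\<Sum>i<N - 1. 1)" unfolding idx_def by (rule sum_mono) simp
  thus ?thesis using \<open>0 < N\<close> by simp
qed

lemma idx_mono:
  assumes "\<forall>i<N - 1. cum p x i \<le> cum q y i"
  shows "idx N q y u \<le> idx N p x u"
  unfolding idx_def by (rule sum_mono) (use assms in auto)

lemma growth_lawD:
  assumes "growth_law N p" "x \<in> ordered N"
  shows "\<And>i. i < N \<Longrightarrow> 0 \<le> p x i" "(\<Sum>i<N. p x i) = 1"
  using assms unfolding growth_law_def by auto

lemma growth_law_N: "growth_law N p \<Longrightarrow> 0 < N"
proof (rule ccontr)
  assume g: "growth_law N p" and "\<not> 0 < N"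
  hence "N = 0" by simp
  have "[] \<in> ordered N" using \<open>N = 0\<close> by (simp add: ordered_def)
  thus False using growth_lawD(2)[OF g] \<open>N = 0\<close> by simp
qed

lemma cum_mono:
  assumes g: "growth_law N p" "x \<in> ordered N" and "i \<le> i'" "i' < N"
  shows "cum p x i \<le> cum p x i'"
  unfolding cum_def
  by (rule sum_mono2) (use assms growth_lawD[OF g] in auto)

lemma cum_nonneg:
  assumes g: "growth_law N p" "x \<in> ordered N" and "i < N"
  shows "0 \<le> cum p x i"
  unfolding cum_def by (rule sum_nonneg) (use assms growth_lawD[OF g] in auto)

lemma cum_last:
  assumes g: "growth_law N p" "x \<in> ordered N"
  shows "cum p x (N - 1) = 1"
  using growth_lawD(2)[OF g] growth_law_N[OF g(1)] unfolding cum_def by simp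

lemma cum_le1:
  assumes g: "growth_law N p" "x \<in> ordered N" and "i < N"
  shows "cum p x i \<le> 1"
  using cum_mono[OF g, of i "N - 1"] cum_last[OF g] assms by simp

lemma idx_le_iff:
  assumes g: "growth_law N p" "x \<in> ordered N" and j: "j < N"
  shows "idx N p x u \<le> j \<longleftrightarrow> (N - 1 \<le> j \<or> u < cum p x j)"
proof
  assume h: "idx N p x u \<le> j"
  show "N - 1 \<le> j \<or> u < cum p x j"
  proof (rule ccontr)
    assume "\<not> (N - 1 \<le> j \<or> u < cum p x j)"
    hence jj: "j < N - 1" "cum p x j \<le> u" by auto
    have "(\<Sum>i<Suc j. 1::nat) \<le> (\<Sum>i<Suc j. if cum p x i \<le> u then 1 else 0)"
    proof (rule sum_mono)
      fix i assume "i \<in> {..<Suc j}"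
      hence "cum p x i \<le> cum p x j" using cum_mono[OF g, of i j] j by simp
      thus "1 \<le> (if cum p x i \<le> u then 1 else 0 :: nat)" using jj by simp
    qed
    also have "\<dots> \<le> idx N p x u" unfolding idx_def
      by (rule sum_mono2) (use jj in auto)
    finally show False using h by simp
  qed
next
  assume h: "N - 1 \<le> j \<or> u < cum p x j"
  show "idx N p x u \<le> j"
  proof (cases "N - 1 \<le> j")
    case True
    have "idx N p x u \<le> (\<Sum>i<N - 1. 1)" unfolding idx_def by (rule sum_mono) simp
    thus ?thesis using True by simp
  next
    case False
    hence u: "u < cum p x j" using h by simp
    have "idx N p x u = (\<Sum>i<N - 1. if i < j then (if cum p x i \<le> u then 1 else 0) else 0)"
      unfolding idx_def
    proof (rule sum.cong)
      fix i assume i: "i \<in> {..<N - 1}"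
      show "(if cum p x i \<le> u then 1 else 0) = (if i < j then (if cum p x i \<le> u then 1 else 0) else (0::nat))"
      proof (cases "i < j")
        case False
        hence "cum p x j \<le> cum p x i" using cum_mono[OF g, of j i] i by simp
        thus ?thesis using u False by simp
      qed simp
    qed simp
    also have "\<dots> = (\<Sum>i\<in>{..<N - 1} \<inter> {i. i < j}. if cum p x i \<le> u then 1 else 0)"
      by (subst sum.inter_restrict) (auto intro!: sum.cong)
    also have "\<dots> \<le> (\<Sum>i\<in>{..<N - 1} \<inter> {i. i < j}. 1)" by (rule sum_mono) simp
    also have "\<dots> \<le> j"
    proof -
      have "{..<N - 1} \<inter> {i. i < j} \<subseteq> {..<j}" by auto
      hence "card ({..<N - 1} \<inter> {i. i < j}) \<le> card {..<j}" by (intro card_mono) auto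
      thus ?thesis by simp
    qed
    finally show ?thesis .
  qed
qed

lemma measure_idx_le:
  assumes g: "growth_law N p" "x \<in> ordered N" and j: "j < N"
  shows "measure D {u. idx N p x u \<le> j} = cum p x j"
proof (cases "N - 1 \<le> j")
  case True
  hence "{u. idx N p x u \<le> j} = space D" using idx_le_iff[OF g j] by auto
  moreover have "j = N - 1" using True j by simp
  ultimately show ?thesis using prob_space.prob_space[OF prob_space_D] cum_last[OF g] by simp
next
  case False
  hence "{u. idx N p x u \<le> j} = {u. u < cum p x j}" using idx_le_iff[OF g j] by auto
  thus ?thesis using measure_D_less cum_nonneg[OF g j] cum_le1[OF g j] by simp
qed

lemma measure_idx_eq:
  assumes g: "growth_law N p" "x \<in> ordered N" and j: "j < N"
  shows "measure D {u. idx N p x u = j} = p x j"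
proof (cases j)
  case 0
  have "{u. idx N p x u = j} = {u. idx N p x u \<le> 0}" using 0 by auto
  thus ?thesis using measure_idx_le[OF g, of 0] j 0 by (simp add: cum_def)
next
  case (Suc j')
  have "{u. idx N p x u = j} = {u. idx N p x u \<le> Suc j'} - {u. idx N p x u \<le> j'}" using Suc by auto
  moreover have "measure D ({u. idx N p x u \<le> Suc j'} - {u. idx N p x u \<le> j'}) =
      measure D {u. idx N p x u \<le> Suc j'} - measure D {u. idx N p x u \<le> j'}"
    by (rule finite_measure.finite_measure_Diff)
       (use prob_space_D in \<open>auto simp: prob_space_def\<close>)
  ultimately show ?thesis using measure_idx_le[OF g, of "Suc j'"] measure_idx_le[OF g, of j'] j Suc
    by (simp add: cum_def)
qed

definition stepf :: "nat \<Rightarrow> (nat list \<Rightarrow> nat \<Rightarrow> real) \<Rightarrow> nat list \<Rightarrow> real \<Rightarrow> nat list" where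
  "stepf N p x u = rearr (x[idx N p x u := x ! idx N p x u + 1])"

lemma stepf_measurable[measurable]: "stepf N p x \<in> borel \<rightarrow>\<^sub>M count_space UNIV"
proof -
  have "(\<lambda>u. (\<lambda>j. rearr (x[j := x ! j + 1])) (idx N p x u)) \<in> borel \<rightarrow>\<^sub>M count_space UNIV"
    by (rule measurable_compose[OF idx_measurable measurable_count_space])
  thus ?thesis by (simp add: stepf_def[abs_def])
qed

lemma stepf_ordered: "x \<in> ordered N \<Longrightarrow> stepf N p x u \<in> ordered N"
  unfolding stepf_def by (rule ordered_rearr) (simp add: ordered_def)

lemma measure_stepf:
  assumes g: "growth_law N p" "x \<in> ordered N"
  shows "measure D {u. stepf N p x u = z} = grow_trans N p x z"
proof -
  let ?S = "{i. i < N \<and> rearr (x[i := x ! i + 1]) = z}"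
  have "{u. stepf N p x u = z} = (\<Union>j\<in>?S. {u. idx N p x u = j})"
    using idx_less[OF growth_law_N[OF g(1)]] by (auto simp: stepf_def)
  moreover have "measure D (\<Union>j\<in>?S. {u. idx N p x u = j}) = (\<Sum>j\<in>?S. measure D {u. idx N p x u = j})"
  proof (rule measure_finite_Union)
    show "finite ?S" by simp
    show "(\<lambda>j. {u. idx N p x u = j}) ` ?S \<subseteq> sets D" by auto
    show "disjoint_family_on (\<lambda>j. {u. idx N p x u = j}) ?S" by (auto simp: disjoint_family_on_def)
    show "\<And>i. emeasure D {u. idx N p x u = i} \<noteq> \<infinity>"
    proof -
      interpret prob_space D by (rule prob_space_D)
      show "\<And>i. emeasure D {u. idx N p x u = i} \<noteq> \<infinity>" by simp
    qed
  qed
  moreover have "(\<Sum>j\<in>?S. measure D {u. idx N p x u = j}) = (\<Sum>j\<in>?S. p x j)"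
    by (rule sum.cong) (use measure_idx_eq[OF g] in auto)
  ultimately show ?thesis by (simp add: grow_trans_def)
qed

fun path :: "nat \<Rightarrow> (nat list \<Rightarrow> nat \<Rightarrow> real) \<Rightarrow> nat list \<Rightarrow> real stream \<Rightarrow> nat \<Rightarrow> nat list" where
  "path N p x \<omega> 0 = x"
| "path N p x \<omega> (Suc n) = path N p (stepf N p x (shd \<omega>)) (stl \<omega>) n"

lemma path_measurable[measurable]: "(\<lambda>\<omega>. path N p x \<omega> n) \<in> stream_space D \<rightarrow>\<^sub>M count_space UNIV"
proof (induction n arbitrary: x)
  case 0
  then show ?case by simp
next
  case (Suc n)
  have h1: "\<And>y. (\<lambda>\<omega>. path N p y (stl \<omega>) n) \<in> stream_space D \<rightarrow>\<^sub>M count_space UNIV"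
    using measurable_compose[OF measurable_stl Suc.IH] by simp
  have h2: "(\<lambda>\<omega>. stepf N p x (shd \<omega>)) \<in> stream_space D \<rightarrow>\<^sub>M count_space UNIV"
    by measurable
  have "(\<lambda>\<omega>. (\<lambda>y \<omega>. path N p y (stl \<omega>) n) (stepf N p x (shd \<omega>)) \<omega>) \<in> stream_space D \<rightarrow>\<^sub>M count_space UNIV"
    by (rule measurable_compose_countable'[where I = UNIV and f = "\<lambda>y \<omega>. path N p y (stl \<omega>) n", OF h1 h2]) simp_all
  thus ?case by simp
qed

lemma path_ordered: "x \<in> ordered N \<Longrightarrow> path N p x \<omega> n \<in> ordered N"
  by (induction n arbitrary: x \<omega>) (auto simp: stepf_ordered)

definition cyl :: "nat \<Rightarrow> (nat list \<Rightarrow> nat \<Rightarrow> real) \<Rightarrow> nat list \<Rightarrow> nat list list \<Rightarrow> real stream set" where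
  "cyl N p x xs = {\<omega> \<in> space (stream_space D). \<forall>i<length xs. path N p x \<omega> i = xs ! i}"

lemma cyl_sets[measurable]: "cyl N p x xs \<in> sets (stream_space D)"
  unfolding cyl_def by measurable

lemma all_less_Suc_split: "(\<forall>i<Suc n. P i) \<longleftrightarrow> P 0 \<and> (\<forall>i<n. P (Suc i))"
  by (auto simp: less_Suc_eq_0_disj)

lemma prob_space_S: "prob_space (stream_space D)"
  by (rule prob_space.prob_space_stream_space[OF prob_space_D])

lemma grow_trans_nonordered:
  assumes "z \<notin> ordered N" "length x = N"
  shows "grow_trans N p x z = 0"
proof -
  have e: "{i. i < N \<and> rearr (x[i := x ! i + 1]) = z} = {}"
    using assms ordered_rearr[of "x[_ := _]" N] by auto
  show ?thesis by (simp only: grow_trans_def e sum.empty)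
qed

lemma cyl_measure:
  assumes g: "growth_law N p"
  shows "x \<in> ordered N \<Longrightarrow> xs \<noteq> [] \<Longrightarrow> measure (stream_space D) (cyl N p x xs) =
    (if hd xs = x then (\<Prod>i<length xs - 1. grow_trans N p (xs ! i) (xs ! Suc i)) else 0)"
proof (induction xs arbitrary: x)
  case Nil
  then show ?case by simp
next
  case (Cons y ys)
  interpret Dp: prob_space D by (rule prob_space_D)
  interpret S: prob_space "stream_space D" by (rule prob_space_S)
  show ?case
  proof (cases "x = y")
    case False
    hence "cyl N p x (y # ys) = {}" unfolding cyl_def by auto
    thus ?thesis using False by simp
  next
    case True
    show ?thesis
    proof (cases ys)
      case Nil
      hence "cyl N p x (y # ys) = space (stream_space D)" unfolding cyl_def using True by auto
      thus ?thesis using Nil True S.prob_space by simp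
    next
      case (Cons z zs)
      let ?P = "\<Prod>i<length zs. grow_trans N p ((z # zs) ! i) ((z # zs) ! Suc i)"
      have IH: "\<And>x'. x' \<in> ordered N \<Longrightarrow> measure (stream_space D) (cyl N p x' (z # zs)) = (if z = x' then ?P else 0)"
        using Cons.IH Cons by simp
      have sl: "\<And>t. {\<omega> \<in> space (stream_space D). t ## \<omega> \<in> cyl N p x (y # ys)} = cyl N p (stepf N p x t) (z # zs)"
        unfolding cyl_def using True Cons
        by (simp only: length_Cons all_less_Suc_split) (auto simp: stream_space_Stream)
      have "emeasure (stream_space D) (cyl N p x (y # ys)) =
            (\<integral>\<^sup>+t. emeasure (stream_space D) (cyl N p (stepf N p x t) (z # zs)) \<partial>D)"
        by (subst Dp.emeasure_stream_space) (simp_all add: sl)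
      also have "\<dots> = (\<integral>\<^sup>+t. ennreal (if z = stepf N p x t then ?P else 0) \<partial>D)"
        by (rule nn_integral_cong) (simp add: S.emeasure_eq_measure IH stepf_ordered Cons.prems(1))
      finally have em: "emeasure (stream_space D) (cyl N p x (y # ys)) = (\<integral>\<^sup>+t. ennreal (if z = stepf N p x t then ?P else 0) \<partial>D)" .
      have rhs: "(\<Prod>i<length (y # ys) - 1. grow_trans N p ((y # ys) ! i) ((y # ys) ! Suc i)) = grow_trans N p x z * ?P"
      proof -
        have l: "length (y # ys) - 1 = Suc (length zs)" using Cons by simp
        have "(\<Prod>i<Suc (length zs). grow_trans N p ((y # ys) ! i) ((y # ys) ! Suc i)) =
           grow_trans N p ((y # ys) ! 0) ((y # ys) ! Suc 0) * (\<Prod>i<length zs. grow_trans N p ((y # ys) ! Suc i) ((y # ys) ! Suc (Suc i)))"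
          by (rule prod.lessThan_Suc_shift)
        thus ?thesis using True Cons l by simp
      qed
      show ?thesis
      proof (cases "z \<in> ordered N")
        case zo: True
        have P0: "0 \<le> ?P" using IH[OF zo] measure_nonneg by (metis)
        have "(\<integral>\<^sup>+t. ennreal (if z = stepf N p x t then ?P else 0) \<partial>D) =
              (\<integral>\<^sup>+t. ennreal ?P * indicator {t. stepf N p x t = z} t \<partial>D)"
          by (rule nn_integral_cong) (auto split: split_indicator)
        also have "\<dots> = ennreal ?P * emeasure D {t. stepf N p x t = z}"
          by (subst nn_integral_cmult_indicator) auto
        also have "\<dots> = ennreal ?P * ennreal (grow_trans N p x z)"
          using measure_stepf[OF g Cons.prems(1)] by (simp add: Dp.emeasure_eq_measure)
        also have "\<dots> = ennreal (grow_trans N p x z * ?P)"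
          using P0 by (simp add: ennreal_mult'' mult.commute)
        finally have "emeasure (stream_space D) (cyl N p x (y # ys)) = ennreal (grow_trans N p x z * ?P)"
          using em by simp
        moreover have "0 \<le> grow_trans N p x z * ?P"
          using P0 measure_stepf[OF g Cons.prems(1), of z] measure_nonneg by (metis mult_nonneg_nonneg)
        ultimately have "measure (stream_space D) (cyl N p x (y # ys)) = grow_trans N p x z * ?P"
          by (simp add: S.emeasure_eq_measure)
        thus ?thesis using rhs True by simp
      next
        case zo: False
        have "(\<integral>\<^sup>+t. ennreal (if z = stepf N p x t then ?P else 0) \<partial>D) = (\<integral>\<^sup>+t. 0 \<partial>D)"
          by (rule nn_integral_cong) (use zo stepf_ordered[OF Cons.prems(1)] in auto)
        hence "measure (stream_space D) (cyl N p x (y # ys)) = 0"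
          using em by (simp add: S.emeasure_eq_measure)
        moreover have "grow_trans N p x z = 0"
          using grow_trans_nonordered[OF zo] Cons.prems(1) by (simp add: ordered_def)
        ultimately show ?thesis using rhs True by simp
      qed
    qed
  qed
qed

lemma path_majorized:
  assumes gp: "growth_law N p" and gq: "growth_law N q"
    and h: "\<forall>eta\<in>ordered N. \<forall>zeta\<in>ordered N. majorized N eta zeta \<longrightarrow>
           (\<forall>k\<in>{1..N}. (\<Sum>i<k. p eta i) \<le> (\<Sum>i<k. q zeta i))"
  shows "eta \<in> ordered N \<Longrightarrow> zeta \<in> ordered N \<Longrightarrow> majorized N eta zeta \<Longrightarrow>
    majorized N (path N p eta \<omega> t) (path N q zeta \<omega> t)"
proof (induction t arbitrary: eta zeta \<omega>)
  case 0
  then show ?case by simp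
next
  case (Suc t)
  let ?u = "shd \<omega>"
  have N0: "0 < N" by (rule growth_law_N[OF gp])
  have c: "\<forall>i<N - 1. cum p eta i \<le> cum q zeta i"
  proof (intro allI impI)
    fix i assume "i < N - 1"
    hence "Suc i \<in> {1..N}" by simp
    thus "cum p eta i \<le> cum q zeta i" using h Suc.prems unfolding cum_def by blast
  qed
  have KJ: "idx N q zeta ?u \<le> idx N p eta ?u" by (rule idx_mono[OF c])
  have "majorized N (stepf N p eta ?u) (stepf N q zeta ?u)"
    unfolding stepf_def
    by (rule majorized_step[OF Suc.prems(1,2,3) KJ idx_less[OF N0]])
  hence "majorized N (path N p (stepf N p eta ?u) (stl \<omega>) t) (path N q (stepf N q zeta ?u) (stl \<omega>) t)"
    by (intro Suc.IH stepf_ordered Suc.prems)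
  thus ?case by simp
qed

theorem proposition3p1:
  fixes N :: nat and p q :: "nat list \<Rightarrow> nat \<Rightarrow> real" and eta0 zeta0 :: "nat list"
  assumes "growth_law N p" and "growth_law N q"
    and "\<forall>eta\<in>ordered N. \<forall>zeta\<in>ordered N. majorized N eta zeta \<longrightarrow>
           (\<forall>k\<in>{1..N}. (\<Sum>i<k. p eta i) \<le> (\<Sum>i<k. q zeta i))"
    and "eta0 \<in> ordered N" and "zeta0 \<in> ordered N" and "majorized N eta0 zeta0"
  shows "\<exists>M :: ((nat \<Rightarrow> nat list) \<times> (nat \<Rightarrow> nat list)) measure.
           prob_space M \<and>
           is_growth_process N p eta0 M fst \<and>
           is_growth_process N q zeta0 M snd \<and>
           (AE w in M. \<forall>t. majorized N (fst w t) (snd w t))"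
proof -
  let ?S = "stream_space D"
  let ?T = "\<Pi>\<^sub>M i\<in>(UNIV::nat set). count_space (UNIV :: nat list set)"
  define f where "f \<omega> = (path N p eta0 \<omega>, path N q zeta0 \<omega>)" for \<omega>
  have pm: "\<And>r x0. (\<lambda>\<omega>. path N r x0 \<omega>) \<in> ?S \<rightarrow>\<^sub>M ?T"
  proof -
    fix r x0
    show "(\<lambda>\<omega>. path N r x0 \<omega>) \<in> ?S \<rightarrow>\<^sub>M ?T"
      by (rule measurable_PiM_single'[where f = "\<lambda>i \<omega>. path N r x0 \<omega> i"])
         (simp_all add: path_measurable space_PiM)
  qed
  have fm: "f \<in> ?S \<rightarrow>\<^sub>M (?T \<Otimes>\<^sub>M ?T)"
    unfolding f_def by (rule measurable_Pair) (rule pm)+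
  define M where "M = distr ?S (?T \<Otimes>\<^sub>M ?T) f"
  have pM: "prob_space M"
    unfolding M_def by (rule prob_space.prob_space_distr[OF prob_space_S fm])
  have spT: "space (?T \<Otimes>\<^sub>M ?T) = UNIV" by (simp add: space_pair_measure space_PiM)
  have gp: "\<And>r x0 (X :: (nat \<Rightarrow> nat list) \<times> (nat \<Rightarrow> nat list) \<Rightarrow> nat \<Rightarrow> nat list).
      growth_law N r \<Longrightarrow> x0 \<in> ordered N \<Longrightarrow>
      (\<And>i. (\<lambda>w. X w i) \<in> (?T \<Otimes>\<^sub>M ?T) \<rightarrow>\<^sub>M count_space UNIV) \<Longrightarrow>
      (\<And>\<omega>. X (f \<omega>) = path N r x0 \<omega>) \<Longrightarrow> is_growth_process N r x0 M X"
  proof -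
    fix r x0 and X :: "(nat \<Rightarrow> nat list) \<times> (nat \<Rightarrow> nat list) \<Rightarrow> nat \<Rightarrow> nat list"
    assume g: "growth_law N r" and x0: "x0 \<in> ordered N"
      and Xm[measurable]: "\<And>i. (\<lambda>w. X w i) \<in> (?T \<Otimes>\<^sub>M ?T) \<rightarrow>\<^sub>M count_space UNIV"
      and Xf: "\<And>\<omega>. X (f \<omega>) = path N r x0 \<omega>"
    show "is_growth_process N r x0 M X"
      unfolding is_growth_process_def
    proof (intro allI impI conjI)
      fix xs :: "nat list list" assume ne: "xs \<noteq> []"
      have A: "{w \<in> space (?T \<Otimes>\<^sub>M ?T). \<forall>i<length xs. X w i = xs ! i} \<in> sets (?T \<Otimes>\<^sub>M ?T)"
        by measurable
      thus "{w \<in> space M. \<forall>i<length xs. X w i = xs ! i} \<in> sets M"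
        unfolding M_def by simp
      have "measure M {w \<in> space M. \<forall>i<length xs. X w i = xs ! i} =
          measure ?S (f -` {w \<in> space (?T \<Otimes>\<^sub>M ?T). \<forall>i<length xs. X w i = xs ! i} \<inter> space ?S)"
        unfolding M_def by (simp add: measure_distr[OF fm A])
      also have "f -` {w \<in> space (?T \<Otimes>\<^sub>M ?T). \<forall>i<length xs. X w i = xs ! i} \<inter> space ?S = cyl N r x0 xs"
        unfolding cyl_def using spT Xf by auto
      finally show "measure M {w \<in> space M. \<forall>i<length xs. X w i = xs ! i} =
          (if hd xs = x0 then (\<Prod>i<length xs - 1. grow_trans N r (xs ! i) (xs ! Suc i)) else 0)"
        using cyl_measure[OF g x0 ne] by simp
    qed
  qed
  have g1: "is_growth_process N p eta0 M fst"
    by (rule gp[OF assms(1,4)]) (simp_all add: f_def)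
  have g2: "is_growth_process N q zeta0 M snd"
    by (rule gp[OF assms(2,5)]) (simp_all add: f_def)
  have P: "{w \<in> space (?T \<Otimes>\<^sub>M ?T). \<forall>t. majorized N (fst w t) (snd w t)} \<in> sets (?T \<Otimes>\<^sub>M ?T)"
    by measurable
  have "AE w in M. \<forall>t. majorized N (fst w t) (snd w t)"
    unfolding M_def
    by (subst AE_distr_iff[OF fm P])
       (auto simp: f_def intro!: path_majorized[OF assms(1,2,3,4,5,6)])
  thus ?thesis using pM g1 g2 by blast
qed

end
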